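(* In the algebra $\mathcal O_q$ defined in the context, for all $n\in\mathbb N$: $$\mathcal W_{n+1}=-(q-q^{-1})^{-1}\sum_{k=0}^n\sum_{\ell=0}^k\binom{k}{\ell}q^{k-2\ell}[2]_q^{-k-2}\tilde B_{(k-2\ell)\delta+\alpha_0}\mathcal G_{n-k},$$ $$\mathcal W_{-n}=-(q-q^{-1})^{-1}\sum_{k=0}^n\sum_{\ell=0}^k\binom{k}{\ell}q^{2\ell-k}[2]_q^{-k-2}\tilde B_{(k-2\ell)\delta+\alpha_1}\mathcal G_{n-k}.$$
   Context: All algebras are associative and unital over a field $\mathbb F$; $q\in\mathbb F$ is nonzero and not a root of unity; $[n]_q=(q^n-q^{-n})/(q-q^{-1})$. For elements $X,Y$ of an algebra, $[X,Y]=XY-YX$ and $[X,Y]_q=qXY-q^{-1}YX$. Let $\rho=-(q^2-q^{-2})^2$. The algebra $\mathcal O_q$ is defined by generators $\mathcal W_{-k},\mathcal W_{k+1},\mathcal G_{k+1},\tilde{\mathcal G}_{k+1}$ ($k\in\mathbb N$) and the following relations for all $k,\ell\in\mathbb N$: $[\mathcal W_0,\mathcal W_{k+1}]=[\mathcal W_{-k},\mathcal W_1]=(\tilde{\mathcal G}_{k+1}-\mathcal G_{k+1})/(q+q^{-1})$; $[\mathcal W_0,\mathcal G_{k+1}]_q=[\tilde{\mathcal G}_{k+1},\mathcal W_0]_q=\rho\mathcal W_{-k-1}-\rho\mathcal W_{k+1}$; $[\mathcal G_{k+1},\mathcal W_1]_q=[\mathcal W_1,\tilde{\mathcal G}_{k+1}]_q=\rho\mathcal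 W_{k+2}-\rho\mathcal W_{-k}$; $[\mathcal W_{-k},\mathcal W_{-\ell}]=0$, $[\mathcal W_{k+1},\mathcal W_{\ell+1}]=0$; $[\mathcal W_{-k},\mathcal W_{\ell+1}]+[\mathcal W_{k+1},\mathcal W_{-\ell}]=0$; $[\mathcal W_{-k},\mathcal G_{\ell+1}]+[\mathcal G_{k+1},\mathcal W_{-\ell}]=0$; $[\mathcal W_{-k},\tilde{\mathcal G}_{\ell+1}]+[\tilde{\mathcal G}_{k+1},\mathcal W_{-\ell}]=0$; $[\mathcal W_{k+1},\mathcal G_{\ell+1}]+[\mathcal G_{k+1},\mathcal W_{\ell+1}]=0$; $[\mathcal W_{k+1},\tilde{\mathcal G}_{\ell+1}]+[\tilde{\mathcal G}_{k+1},\mathcal W_{\ell+1}]=0$; $[\mathcal G_{k+1},\mathcal G_{\ell+1}]=0$, $[\tilde{\mathcal G}_{k+1},\tilde{\mathcal G}_{\ell+1}]=0$; $[\tilde{\mathcal G}_{k+1},\mathcal G_{\ell+1}]+[\mathcal G_{k+1},\tilde{\mathcal G}_{\ell+1}]=0$. Convention: $\mathcal G_0=-(q-q^{-1})[2]_q^2$. Define $\tilde B_\delta=q^{-2}\mathcal W_0\mathcal W_1-\mathcal W_1\mathcal W_0$; $\tilde B_{\alpha_0}=\mathcal W_1$, $\tilde B_{\delta+\alpha_0}=\mathcal W_0+\frac{q[\tilde B_\delta,\mathcal W_1]}{(q-q^{-1})(q^2-q^{-2})}$, $\tilde B_{n\delta+\alpha_0}=\tilde B_{(n-2)\delta+\alpha_0}+\frac{q[\tilde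 B_\delta,\tilde B_{(n-1)\delta+\alpha_0}]}{(q-q^{-1})(q^2-q^{-2})}$ for $n\ge2$; $\tilde B_{\alpha_1}=\mathcal W_0$, $\tilde B_{\delta+\alpha_1}=\mathcal W_1-\frac{q[\tilde B_\delta,\mathcal W_0]}{(q-q^{-1})(q^2-q^{-2})}$, $\tilde B_{n\delta+\alpha_1}=\tilde B_{(n-2)\delta+\alpha_1}-\frac{q[\tilde B_\delta,\tilde B_{(n-1)\delta+\alpha_1}]}{(q-q^{-1})(q^2-q^{-2})}$ for $n\ge2$. For negative integers $k$, set $\tilde B_{k\delta+\alpha_0}=\tilde B_{(-k-1)\delta+\alpha_1}$ and $\tilde B_{k\delta+\alpha_1}=\tilde B_{(-k-1)\delta+\alpha_0}$. *)

theory Defs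
  imports Main
begin

text \<open>An algebra over a field 'k is modelled as a ring 'a together with a unital ring
homomorphism emb : 'k -> 'a whose image is central (the structure map).\<close>

definition scalar_emb :: "('k::field \<Rightarrow> 'a::ring_1) \<Rightarrow> bool" where
  "scalar_emb emb \<longleftrightarrow> emb 1 = 1 \<and> (\<forall>x y. emb (x + y) = emb x + emb y)
     \<and> (\<forall>x y. emb (x * y) = emb x * emb y) \<and> (\<forall>x a. emb x * a = a * emb x)"

definition comm :: "'a::ring_1 \<Rightarrow> 'a \<Rightarrow> 'a" where
  "comm x y = x * y - y * x"

definition qcomm :: "('k::field \<Rightarrow> 'a::ring_1) \<Rightarrow> 'k \<Rightarrow> 'a \<Rightarrow> 'a \<Rightarrow> 'a" where
  "qcomm emb q x y = emb q * x * y - emb (inverse q) * y * x"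

definition qint :: "'k::field \<Rightarrow> nat \<Rightarrow> 'k" where
  "qint q n = (q ^ n - inverse q ^ n) / (q - inverse q)"

definition rho :: "'k::field \<Rightarrow> 'k" where
  "rho q = - ((q^2 - inverse q ^ 2) ^ 2)"

text \<open>Generators: W i for i :: int encodes W_{-k} (i = -k) and W_{k+1} (i = k+1);
  G m, Gt m (m \<ge> 1) are the generators G_m and tilde-G_m (the value at 0 is irrelevant).\<close>

definition Oq_relations ::
  "('k::field \<Rightarrow> 'a::ring_1) \<Rightarrow> 'k \<Rightarrow> (int \<Rightarrow> 'a) \<Rightarrow> (nat \<Rightarrow> 'a) \<Rightarrow> (nat \<Rightarrow> 'a) \<Rightarrow> bool" where
  "Oq_relations emb q W G Gt \<longleftrightarrow>
    (\<forall>k::nat. comm (W 0) (W (int k + 1)) = emb (inverse (qint q 2)) * (Gt (k+1) - G (k+1))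
            \<and> comm (W (- int k)) (W 1) = emb (inverse (qint q 2)) * (Gt (k+1) - G (k+1)))
  \<and> (\<forall>k::nat. qcomm emb q (W 0) (G (k+1)) = emb (rho q) * W (- int k - 1) - emb (rho q) * W (int k + 1)
            \<and> qcomm emb q (Gt (k+1)) (W 0) = emb (rho q) * W (- int k - 1) - emb (rho q) * W (int k + 1))
  \<and> (\<forall>k::nat. qcomm emb q (G (k+1)) (W 1) = emb (rho q) * W (int k + 2) - emb (rho q) * W (- int k)
            \<and> qcomm emb q (W 1) (Gt (k+1)) = emb (rho q) * W (int k + 2) - emb (rho q) * W (- int k))
  \<and> (\<forall>k l::nat.
        comm (W (- int k)) (W (- int l)) = 0
      \<and> comm (W (int k + 1)) (W (int l + 1)) = 0
      \<and> comm (W (- int k)) (W (int l + 1)) + comm (W (int k + 1)) (W (- int l)) = 0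
      \<and> comm (W (- int k)) (G (l+1)) + comm (G (k+1)) (W (- int l)) = 0
      \<and> comm (W (- int k)) (Gt (l+1)) + comm (Gt (k+1)) (W (- int l)) = 0
      \<and> comm (W (int k + 1)) (G (l+1)) + comm (G (k+1)) (W (int l + 1)) = 0
      \<and> comm (W (int k + 1)) (Gt (l+1)) + comm (Gt (k+1)) (W (int l + 1)) = 0
      \<and> comm (G (k+1)) (G (l+1)) = 0
      \<and> comm (Gt (k+1)) (Gt (l+1)) = 0
      \<and> comm (Gt (k+1)) (G (l+1)) + comm (G (k+1)) (Gt (l+1)) = 0)"

definition Gext :: "('k::field \<Rightarrow> 'a::ring_1) \<Rightarrow> 'k \<Rightarrow> (nat \<Rightarrow> 'a) \<Rightarrow> nat \<Rightarrow> 'a" where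
  "Gext emb q G m = (if m = 0 then emb (- (q - inverse q) * (qint q 2) ^ 2) else G m)"

definition Bdelta :: "('k::field \<Rightarrow> 'a::ring_1) \<Rightarrow> 'k \<Rightarrow> (int \<Rightarrow> 'a) \<Rightarrow> 'a" where
  "Bdelta emb q W = emb (inverse q ^ 2) * W 0 * W 1 - W 1 * W 0"

definition Bcoef :: "'k::field \<Rightarrow> 'k" where
  "Bcoef q = q / ((q - inverse q) * (q^2 - inverse q ^ 2))"

text \<open>Ba0 n = tilde-B_{n delta + alpha_0}, Ba1 n = tilde-B_{n delta + alpha_1} (n \<ge> 0).\<close>
fun Ba0 :: "('k::field \<Rightarrow> 'a::ring_1) \<Rightarrow> 'k \<Rightarrow> (int \<Rightarrow> 'a) \<Rightarrow> nat \<Rightarrow> 'a" where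
  "Ba0 emb q W 0 = W 1"
| "Ba0 emb q W (Suc 0) = W 0 + emb (Bcoef q) * comm (Bdelta emb q W) (W 1)"
| "Ba0 emb q W (Suc (Suc n)) = Ba0 emb q W n + emb (Bcoef q) * comm (Bdelta emb q W) (Ba0 emb q W (Suc n))"

fun Ba1 :: "('k::field \<Rightarrow> 'a::ring_1) \<Rightarrow> 'k \<Rightarrow> (int \<Rightarrow> 'a) \<Rightarrow> nat \<Rightarrow> 'a" where
  "Ba1 emb q W 0 = W 0"
| "Ba1 emb q W (Suc 0) = W 1 - emb (Bcoef q) * comm (Bdelta emb q W) (W 0)"
| "Ba1 emb q W (Suc (Suc n)) = Ba1 emb q W n - emb (Bcoef q) * comm (Bdelta emb q W) (Ba1 emb q W (Suc n))"

definition Bt0 :: "('k::field \<Rightarrow> 'a::ring_1) \<Rightarrow> 'k \<Rightarrow> (int \<Rightarrow> 'a) \<Rightarrow> int \<Rightarrow> 'a" where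
  "Bt0 emb q W k = (if k \<ge> 0 then Ba0 emb q W (nat k) else Ba1 emb q W (nat (- k - 1)))"

definition Bt1 :: "('k::field \<Rightarrow> 'a::ring_1) \<Rightarrow> 'k \<Rightarrow> (int \<Rightarrow> 'a) \<Rightarrow> int \<Rightarrow> 'a" where
  "Bt1 emb q W k = (if k \<ge> 0 then Ba1 emb q W (nat k) else Ba0 emb q W (nat (- k - 1)))"

end

theory Submission
  imports Defs
begin

locale alg =
  fixes emb :: "'k::field \<Rightarrow> 'a::ring_1"
  assumes se: "scalar_emb emb"
begin
lemma emb1[simp]: "emb 1 = 1" using se unfolding scalar_emb_def by blast
lemma emb_add: "emb (x+y) = emb x + emb y" using se unfolding scalar_emb_def by blast
lemma emb_mult: "emb (x*y) = emb x * emb y" using se unfolding scalar_emb_def by blast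
lemma emb_central: "emb x * a = a * emb x" using se unfolding scalar_emb_def by blast
lemma emb0[simp]: "emb 0 = 0"
proof -
  have "emb 0 = emb 0 + emb 0" using emb_add[of 0 0] by simp
  then show ?thesis by simp
qed
lemma emb_uminus: "emb (-x) = - emb x"
proof -
  have "emb x + emb (-x) = 0" using emb_add[of x "-x"] by simp
  then show ?thesis by (simp add: eq_neg_iff_add_eq_0 add.commute)
qed
lemma emb_diff: "emb (x - y) = emb x - emb y"
  using emb_add[of x "-y"] emb_uminus[of y] by simp
lemma emb_power: "emb (x^n) = emb x ^ n"
  by (induction n) (simp_all add: emb_mult)
lemma emb_inv: "x \<noteq> 0 \<Longrightarrow> emb (inverse x) * emb x = 1"
  by (simp flip: emb_mult)
lemma emb_inv2: "x \<noteq> 0 \<Longrightarrow> emb x * emb (inverse x) = 1"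
  by (simp flip: emb_mult)
lemma emb_sum: "emb (sum f A) = sum (\<lambda>i. emb (f i)) A"
  by (induction A rule: infinite_finite_induct) (simp_all add: emb_add)
lemma emb_left: "x * (emb a * y) = emb a * (x * y)"
  by (metis emb_central mult.assoc)
lemma emb_right: "x * emb a = emb a * x"
  by (rule emb_central[symmetric])
end

lemma qint2: "q \<noteq> 0 \<Longrightarrow> q^2 \<noteq> 1 \<Longrightarrow> qint q 2 = q + inverse (q::'k::field)"
  unfolding qint_def
  by (simp add: field_simps power2_eq_square) 


context alg begin
lemma emb_swap: "emb a * emb b = emb b * emb a" by (rule emb_central)
lemma emb_swap2: "emb a * (emb b * y) = emb b * (emb a * y)" by (metis emb_central mult.assoc)
end

locale oq = alg emb for emb :: "'k::field \<Rightarrow> 'a::ring_1" +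
  fixes q :: 'k and W :: "int \<Rightarrow> 'a" and G Gt :: "nat \<Rightarrow> 'a"
  assumes q0: "q \<noteq> 0" and q2: "q^2 \<noteq> 1" and q4: "q^4 \<noteq> 1"
  and rel: "Oq_relations emb q W G Gt"
begin
lemma qq1: "emb q * (emb (inverse q) * y) = y" "emb (inverse q) * (emb q * y) = y"
  "emb q * emb (inverse q) = 1" "emb (inverse q) * emb q = 1"
proof -
  have a: "emb q * emb (inverse q) = 1" "emb (inverse q) * emb q = 1"
    using q0 by (simp_all flip: emb_mult)
  show "emb q * emb (inverse q) = 1" "emb (inverse q) * emb q = 1" by (fact a)+
  show "emb q * (emb (inverse q) * y) = y" "emb (inverse q) * (emb q * y) = y"
    by (simp_all add: a flip: mult.assoc)
qed
lemmas wl = emb_left[of "W i" for i] emb_left[of "G i" for i] emb_left[of "Gt i" for i]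
  emb_right[of "W i" for i] emb_right[of "G i" for i] emb_right[of "Gt i" for i]
lemmas nf = distrib_left distrib_right left_diff_distrib right_diff_distrib mult_minus_left mult_minus_right mult.assoc
  wl emb_add emb_mult emb_diff emb_uminus emb_swap emb_swap2 qq1


lemma t2: "qint q 2 = q + inverse q" using qint2 q0 q2 by blast
lemma t2nz: "q + inverse q \<noteq> 0"
proof
  assume "q + inverse q = 0"
  then have "q * (q + inverse q) = 0" by simp
  then have "q * q + 1 = 0" using q0 by (simp add: distrib_left)
  then have "q * q = -1" by (simp add: eq_neg_iff_add_eq_0)
  then have "q^4 = 1" by (metis (no_types) power4_eq_xxxx mult.assoc mult_minus_left mult_1 minus_minus)
  with q4 show False by simp
qed
lemma cancel_nz: "c \<noteq> 0 \<Longrightarrow> emb c * x = 0 \<Longrightarrow> x = 0"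
proof -
  assume c: "c \<noteq> 0" and h: "emb c * x = 0"
  have "x = emb (inverse c) * (emb c * x)" using c by (simp flip: mult.assoc emb_mult)
  then show "x = 0" using h by simp
qed

lemma rW0W1: "comm (W 0) (W 1) = emb (inverse (qint q 2)) * (Gt 1 - G 1)"
  using rel unfolding Oq_relations_def by (metis add_0 of_nat_0)
lemma rG1W1: "qcomm emb q (G 1) (W 1) = qcomm emb q (W 1) (Gt 1)"
  using rel unfolding Oq_relations_def by (metis add_0 of_nat_0)
lemma rW0G1: "qcomm emb q (W 0) (G 1) = qcomm emb q (Gt 1) (W 0)"
  using rel unfolding Oq_relations_def by (metis add_0 of_nat_0)

lemma Gt1: "Gt 1 = G 1 + emb (q + inverse q) * (W 0 * W 1 - W 1 * W 0)"
proof -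
  have "emb (q + inverse q) * (W 0 * W 1 - W 1 * W 0) = emb (q + inverse q) * (emb (inverse (q + inverse q)) * (Gt 1 - G 1))"
    using rW0W1 t2 by (simp add: comm_def)
  also have "\<dots> = Gt 1 - G 1" using t2nz by (simp flip: mult.assoc emb_mult)
  finally show ?thesis by simp
qed

lemma G1W1: "G 1 * W 1 = W 1 * G 1 - emb (inverse q) * ((W 0 * W 1 - W 1 * W 0) * W 1) + emb q * (W 1 * (W 0 * W 1 - W 1 * W 0))"
proof -
  have e: "emb q * G 1 * W 1 - emb (inverse q) * W 1 * G 1 = emb q * W 1 * Gt 1 - emb (inverse q) * Gt 1 * W 1"
    using rG1W1 by (simp add: qcomm_def)
  have "emb (q + inverse q) * (G 1 * W 1 - (W 1 * G 1 - emb (inverse q) * ((W 0 * W 1 - W 1 * W 0) * W 1) + emb q * (W 1 * (W 0 * W 1 - W 1 * W 0))))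
    = (emb q * G 1 * W 1 - emb (inverse q) * W 1 * G 1) - (emb q * W 1 * Gt 1 - emb (inverse q) * Gt 1 * W 1)"
    unfolding Gt1 by (simp add: nf algebra_simps)
  then have "emb (q + inverse q) * (G 1 * W 1 - (W 1 * G 1 - emb (inverse q) * ((W 0 * W 1 - W 1 * W 0) * W 1) + emb q * (W 1 * (W 0 * W 1 - W 1 * W 0)))) = 0"
    using e by simp
  then have "G 1 * W 1 - (W 1 * G 1 - emb (inverse q) * ((W 0 * W 1 - W 1 * W 0) * W 1) + emb q * (W 1 * (W 0 * W 1 - W 1 * W 0))) = 0"
    by (rule cancel_nz[OF t2nz])
  then show ?thesis by simp
qed

lemma G1W0: "G 1 * W 0 = W 0 * G 1 - emb q * ((W 0 * W 1 - W 1 * W 0) * W 0) + emb (inverse q) * (W 0 * (W 0 * W 1 - W 1 * W 0))"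
proof -
  have e: "emb q * W 0 * G 1 - emb (inverse q) * G 1 * W 0 = emb q * Gt 1 * W 0 - emb (inverse q) * W 0 * Gt 1"
    using rW0G1 by (simp add: qcomm_def)
  have "emb (q + inverse q) * (G 1 * W 0 - (W 0 * G 1 - emb q * ((W 0 * W 1 - W 1 * W 0) * W 0) + emb (inverse q) * (W 0 * (W 0 * W 1 - W 1 * W 0))))
    = (emb q * Gt 1 * W 0 - emb (inverse q) * W 0 * Gt 1) - (emb q * W 0 * G 1 - emb (inverse q) * G 1 * W 0)"
    unfolding Gt1 by (simp add: nf algebra_simps)
  then have "emb (q + inverse q) * (G 1 * W 0 - (W 0 * G 1 - emb q * ((W 0 * W 1 - W 1 * W 0) * W 0) + emb (inverse q) * (W 0 * (W 0 * W 1 - W 1 * W 0)))) = 0"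
    using e by simp
  then have "G 1 * W 0 - (W 0 * G 1 - emb q * ((W 0 * W 1 - W 1 * W 0) * W 0) + emb (inverse q) * (W 0 * (W 0 * W 1 - W 1 * W 0))) = 0"
    by (rule cancel_nz[OF t2nz])
  then show ?thesis by simp
qed

abbreviation Bd where "Bd \<equiv> Bdelta emb q W"
abbreviation Zc where "Zc \<equiv> G 1 + emb q * Bd"
definition cz :: "'a \<Rightarrow> bool" where "cz x \<longleftrightarrow> Zc * x = x * Zc"

lemma cz_W1: "cz (W 1)"
proof -
  have "Zc * W 1 = G 1 * W 1 + emb q * (Bd * W 1)" by (simp add: distrib_right mult.assoc)
  also have "\<dots> = W 1 * G 1 - emb (inverse q) * ((W 0 * W 1 - W 1 * W 0) * W 1) + emb q * (W 1 * (W 0 * W 1 - W 1 * W 0)) + emb q * (Bd * W 1)"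
    by (simp only: G1W1)
  also have "\<dots> = W 1 * Zc"
    unfolding Bdelta_def by (simp add: nf algebra_simps power2_eq_square)
  finally show ?thesis unfolding cz_def .
qed
lemma cz_W0: "cz (W 0)"
proof -
  have "Zc * W 0 = G 1 * W 0 + emb q * (Bd * W 0)" by (simp add: distrib_right mult.assoc)
  also have "\<dots> = W 0 * G 1 - emb q * ((W 0 * W 1 - W 1 * W 0) * W 0) + emb (inverse q) * (W 0 * (W 0 * W 1 - W 1 * W 0)) + emb q * (Bd * W 0)"
    by (simp only: G1W0)
  also have "\<dots> = W 0 * Zc"
    unfolding Bdelta_def by (simp add: nf algebra_simps power2_eq_square)
  finally show ?thesis unfolding cz_def .
qed
lemma cz_add: "cz x \<Longrightarrow> cz y \<Longrightarrow> cz (x + y)" unfolding cz_def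
proof -
  assume a: "Zc * x = x * Zc" and b: "Zc * y = y * Zc"
  have "Zc * (x + y) = Zc * x + Zc * y" by (rule distrib_left)
  also have "\<dots> = x * Zc + y * Zc" by (simp only: a b)
  also have "\<dots> = (x + y) * Zc" by (rule distrib_right[symmetric])
  finally show "Zc * (x + y) = (x + y) * Zc" .
qed
lemma cz_diff: "cz x \<Longrightarrow> cz y \<Longrightarrow> cz (x - y)" unfolding cz_def
proof -
  assume a: "Zc * x = x * Zc" and b: "Zc * y = y * Zc"
  have "Zc * (x - y) = Zc * x - Zc * y" by (rule right_diff_distrib)
  also have "\<dots> = x * Zc - y * Zc" by (simp only: a b)
  also have "\<dots> = (x - y) * Zc" by (rule left_diff_distrib[symmetric])
  finally show "Zc * (x - y) = (x - y) * Zc" .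
qed
lemma cz_mult: "cz x \<Longrightarrow> cz y \<Longrightarrow> cz (x * y)" unfolding cz_def
proof -
  assume a: "Zc * x = x * Zc" and b: "Zc * y = y * Zc"
  have "Zc * (x * y) = (Zc * x) * y" by (rule mult.assoc[symmetric])
  also have "\<dots> = x * (Zc * y)" by (simp only: a mult.assoc)
  also have "\<dots> = (x * y) * Zc" by (simp only: b mult.assoc)
  finally show "Zc * (x * y) = (x * y) * Zc" .
qed
lemma cz_emb: "cz (emb a)" unfolding cz_def by (rule emb_central[symmetric])
lemma cz_0: "cz 0" unfolding cz_def by simp
lemma cz_sum: "(\<And>i. i \<in> A \<Longrightarrow> cz (f i)) \<Longrightarrow> cz (sum f A)"
  by (induction A rule: infinite_finite_induct) (auto intro: cz_add cz_0)
lemma cz_comm: "cz x \<Longrightarrow> cz y \<Longrightarrow> cz (comm x y)" unfolding comm_def by (intro cz_diff cz_mult)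
lemma cz_Bd: "cz Bd" unfolding Bdelta_def by (intro cz_diff cz_mult cz_emb cz_W0 cz_W1)
lemma cz_Ba0_aux: "cz (Ba0 emb q W n) \<and> cz (Ba0 emb q W (Suc n))"
  by (induction n) (auto intro!: cz_add cz_mult cz_emb cz_comm cz_Bd cz_W0 cz_W1)
lemma cz_Ba1_aux: "cz (Ba1 emb q W n) \<and> cz (Ba1 emb q W (Suc n))"
  by (induction n) (auto intro!: cz_add cz_diff cz_mult cz_emb cz_comm cz_Bd cz_W0 cz_W1)
lemma cz_Ba0: "cz (Ba0 emb q W n)" using cz_Ba0_aux by blast
lemma cz_Ba1: "cz (Ba1 emb q W n)" using cz_Ba1_aux by blast
lemma cz_Bt0: "cz (Bt0 emb q W m)" unfolding Bt0_def by (simp add: cz_Ba0 cz_Ba1)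
lemma G1_cz: "cz x \<Longrightarrow> comm (G 1) x = - (emb q * comm Bd x)"
proof -
  assume "cz x"
  then have h: "G 1 * x + emb q * (Bd * x) = x * G 1 + emb q * (x * Bd)"
    unfolding cz_def by (simp add: distrib_left distrib_right mult.assoc emb_left)
  have "comm (G 1) x = (G 1 * x + emb q * (Bd * x)) - x * G 1 - emb q * (Bd * x)" unfolding comm_def by simp
  also have "\<dots> = emb q * (x * Bd) - emb q * (Bd * x)" unfolding h by simp
  finally show ?thesis unfolding comm_def by (simp add: right_diff_distrib)
qed

abbreviation b where "b \<equiv> Bt0 emb q W"
abbreviation cB where "cB \<equiv> emb (Bcoef q)"

lemma brec: "b (m+1) - b (m-1) = cB * comm Bd (b m)"
proof -
  consider "m \<ge> 1" | "m = 0" | "m = -1" | "m \<le> -2" by linarith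
  then show ?thesis
  proof cases
    case 1
    define n where "n = nat (m - 1)"
    have n: "m = int n + 1" using 1 n_def by simp
    have "b (m+1) = Ba0 emb q W (Suc (Suc n))" unfolding Bt0_def n by (simp add: nat_add_distrib)
    moreover have "b (m-1) = Ba0 emb q W n" unfolding Bt0_def n by simp
    moreover have "b m = Ba0 emb q W (Suc n)" unfolding Bt0_def n by (simp add: nat_add_distrib)
    ultimately show ?thesis by simp
  next
    case 2 then show ?thesis by (simp add: Bt0_def)
  next
    case 3 then show ?thesis by (simp add: Bt0_def)
  next
    case 4
    define n where "n = nat (- m - 2)"
    have n: "m = - int n - 2" using 4 n_def by simp
    have "b (m+1) = Ba1 emb q W n" unfolding Bt0_def n by simp
    moreover have "b (m-1) = Ba1 emb q W (Suc (Suc n))" unfolding Bt0_def n by (simp add: nat_add_distrib)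
    moreover have "b m = Ba1 emb q W (Suc n)" unfolding Bt0_def n by (simp add: nat_add_distrib)
    ultimately show ?thesis by simp
  qed
qed

lemma comm_sum: "comm x (sum f A) = sum (\<lambda>i. comm x (f i)) A"
  unfolding comm_def by (simp add: sum_distrib_left sum_distrib_right sum_subtractf)
lemma comm_emb: "comm x (emb a * y) = emb a * comm x y"
  unfolding comm_def by (simp add: right_diff_distrib emb_left mult.assoc)

definition T :: "nat \<Rightarrow> nat \<Rightarrow> int \<Rightarrow> 'a" where
  "T k l r = emb (of_nat (k choose l) * q powi (int k - 2 * int l)) * b (int k - 2 * int l + r)"
definition E :: "nat \<Rightarrow> int \<Rightarrow> 'a" where
  "E k r = (\<Sum>l\<le>k. T k l r)"

lemma E_diff: "E k (r+1) - E k (r-1) = cB * comm Bd (E k r)"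
proof -
  have "E k (r+1) - E k (r-1) = (\<Sum>l\<le>k. T k l (r+1) - T k l (r-1))"
    unfolding E_def by (simp add: sum_subtractf)
  also have "\<dots> = (\<Sum>l\<le>k. cB * comm Bd (T k l r))"
  proof (rule sum.cong)
    fix l assume "l \<in> {..k}"
    have "T k l (r+1) - T k l (r-1) = emb (of_nat (k choose l) * q powi (int k - 2 * int l)) * (b ((int k - 2 * int l + r) + 1) - b ((int k - 2 * int l + r) - 1))"
    proof -
      have i1: "int k - 2 * int l + (r + 1) = (int k - 2 * int l + r) + 1" 
        and i2: "int k - 2 * int l + (r - 1) = (int k - 2 * int l + r) - 1" by simp_all
      show ?thesis unfolding T_def i1 i2 by (simp only: right_diff_distrib)
    qed
    also have "\<dots> = cB * comm Bd (T k l r)"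
      unfolding brec T_def comm_emb by (rule emb_swap2)
    finally show "T k l (r+1) - T k l (r-1) = cB * comm Bd (T k l r)" .
  qed simp
  also have "\<dots> = cB * comm Bd (E k r)"
    unfolding E_def comm_sum by (simp add: sum_distrib_left)
  finally show ?thesis .
qed

lemma T_top: "T k (Suc k) r = 0" unfolding T_def by (simp add: binomial_eq_0)
lemma T_0: "T (Suc k) 0 r = emb q * T k 0 (r+1)"
proof -
  have i: "int (Suc k) - 2 * int 0 + r = int k - 2 * int 0 + (r + 1)" by simp
  have p: "q powi (int (Suc k) - 2 * int 0) = q * q powi (int k - 2 * int 0)"
  proof -
    have e: "int (Suc k) - 2 * int 0 = int (Suc k)" "int k - 2 * int 0 = int k" by simp_all
    show ?thesis by (simp only: e power_int_of_nat power_Suc)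
  qed
  show ?thesis unfolding T_def i p binomial_n_0
    by (simp only: emb_mult mult.assoc mult.left_commute[of "of_nat _" q])
qed
lemma T_Suc: "T (Suc k) (Suc l) r = emb (inverse q) * T k l (r-1) + emb q * T k (Suc l) (r+1)"
proof -
  have i1: "int (Suc k) - 2 * int (Suc l) + r = int k - 2 * int l + (r - 1)" by simp
  have i2: "int (Suc k) - 2 * int (Suc l) + r = int k - 2 * int (Suc l) + (r + 1)" by simp
  have p1: "q powi (int (Suc k) - 2 * int (Suc l)) = inverse q * q powi (int k - 2 * int l)"
  proof -
    have e: "int (Suc k) - 2 * int (Suc l) = (int k - 2 * int l) + (-1)" by simp
    have "q powi (int (Suc k) - 2 * int (Suc l)) = q powi (int k - 2 * int l) * q powi (-1)"
      unfolding e by (rule power_int_add) (simp add: q0)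
    also have "\<dots> = inverse q * q powi (int k - 2 * int l)" by (simp add: power_int_minus)
    finally show ?thesis .
  qed
  have p2: "q powi (int (Suc k) - 2 * int (Suc l)) = q * q powi (int k - 2 * int (Suc l))"
  proof -
    have "int (Suc k) - 2 * int (Suc l) = (int k - 2 * int (Suc l)) + 1" by simp
    then show ?thesis by (simp only:) (rule power_int_add_1', simp add: q0)
  qed
  have "T (Suc k) (Suc l) r = emb (of_nat (k choose l) * q powi (int (Suc k) - 2 * int (Suc l))) * b (int (Suc k) - 2 * int (Suc l) + r)
     + emb (of_nat (k choose Suc l) * q powi (int (Suc k) - 2 * int (Suc l))) * b (int (Suc k) - 2 * int (Suc l) + r)"
    unfolding T_def by (simp only: binomial_Suc_Suc of_nat_add distrib_right emb_add)
  also have "\<dots> = emb (inverse q) * T k l (r-1) + emb q * T k (Suc l) (r+1)"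
    unfolding T_def
    apply (subst (1) i1, subst (1) i2, subst (1) p1, subst (1) p2)
    by (simp only: mult.left_commute[of "of_nat _" "inverse q"] mult.left_commute[of "of_nat _" q] emb_mult mult.assoc)
  finally show ?thesis .
qed

lemma E_pascal: "E (Suc k) r = emb q * E k (r+1) + emb (inverse q) * E k (r-1)"
proof -
  have "E (Suc k) r = T (Suc k) 0 r + (\<Sum>l\<le>k. T (Suc k) (Suc l) r)"
    unfolding E_def by (rule sum.atMost_Suc_shift)
  also have "\<dots> = emb q * T k 0 (r+1) + emb (inverse q) * E k (r-1) + emb q * (\<Sum>l\<le>k. T k (Suc l) (r+1))"
    unfolding T_0 T_Suc E_def by (simp add: sum.distrib sum_distrib_left)
  also have "E k (r+1) = T k 0 (r+1) + (\<Sum>l\<le>k. T k (Suc l) (r+1))"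
  proof -
    have "E k (r+1) = (\<Sum>l\<le>Suc k. T k l (r+1))" unfolding E_def by (simp add: T_top)
    also have "\<dots> = T k 0 (r+1) + (\<Sum>l\<le>k. T k (Suc l) (r+1))" by (rule sum.atMost_Suc_shift)
    finally show ?thesis .
  qed
  ultimately show ?thesis by (simp add: distrib_left)
qed

lemma emb_emb: "emb s1 * (emb s2 * x) = emb (s1 * s2) * x"
  by (simp add: emb_mult mult.assoc)

lemma L1: "E (Suc k) 0 = emb (qint q 2) * E k (-1) + emb q * (cB * comm Bd (E k 0))"
proof -
  have d: "E k (0+1) - E k (0-1) = cB * comm Bd (E k 0)" by (rule E_diff)
  have d': "E k 1 = E k (-1) + cB * comm Bd (E k 0)" using d by (simp add: algebra_simps)
  show ?thesis unfolding E_pascal t2 by (simp add: d' emb_add distrib_left distrib_right)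
qed
lemma L2: "E (Suc k) (-1) = emb (qint q 2) * E k 0 - emb (inverse q) * (cB * comm Bd (E k (-1)))"
proof -
  have d: "E k (-1+1) - E k (-1-1) = cB * comm Bd (E k (-1))" by (rule E_diff)
  have d': "E k (-2) = E k 0 - cB * comm Bd (E k (-1))" using d by (simp add: algebra_simps)
  show ?thesis unfolding E_pascal t2 by (simp add: d' emb_add distrib_left distrib_right right_diff_distrib)
qed

definition X :: "nat \<Rightarrow> 'a" where
  "X k = (\<Sum>l\<le>k. emb (of_nat (k choose l) * q powi (int k - 2 * int l) * inverse (qint q 2 ^ (k + 2)))
            * Bt0 emb q W (int k - 2 * int l))"
definition Y :: "nat \<Rightarrow> 'a" where
  "Y k = (\<Sum>l\<le>k. emb (of_nat (k choose l) * q powi (2 * int l - int k) * inverse (qint q 2 ^ (k + 2)))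
            * Bt1 emb q W (int k - 2 * int l))"

lemma X_E: "X k = emb (inverse (qint q 2 ^ (k+2))) * E k 0"
  unfolding X_def E_def T_def sum_distrib_left
  by (rule sum.cong) (simp_all add: emb_mult mult.assoc emb_swap2)

lemma Bt1_Bt0: "Bt1 emb q W j = b (- j - 1)"
  unfolding Bt1_def Bt0_def by auto

lemma Y_E: "Y k = emb (inverse (qint q 2 ^ (k+2))) * E k (-1)"
proof -
  have "Y k = (\<Sum>l\<in>{0..k}. emb (of_nat (k choose (k + 0 - l)) * q powi (2 * int (k + 0 - l) - int k) * inverse (qint q 2 ^ (k + 2)))
            * Bt1 emb q W (int k - 2 * int (k + 0 - l)))"
    unfolding Y_def atMost_atLeast0 by (rule sum.atLeastAtMost_rev)
  also have "\<dots> = (\<Sum>l\<in>{0..k}. emb (inverse (qint q 2 ^ (k+2))) * T k l (-1))"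
  proof (rule sum.cong)
    fix l assume "l \<in> {0..k}"
    then have l: "l \<le> k" by simp
    have c: "k choose (k + 0 - l) = k choose l" using l by (simp add: binomial_symmetric[symmetric])
    have p: "2 * int (k + 0 - l) - int k = int k - 2 * int l" using l by simp
    have i: "- (int k - 2 * int (k + 0 - l)) - 1 = int k - 2 * int l + -1" using l by simp
    show "emb (of_nat (k choose (k + 0 - l)) * q powi (2 * int (k + 0 - l) - int k) * inverse (qint q 2 ^ (k + 2)))
            * Bt1 emb q W (int k - 2 * int (k + 0 - l)) = emb (inverse (qint q 2 ^ (k+2))) * T k l (-1)"
      unfolding T_def Bt1_Bt0 c p i by (simp add: emb_mult mult.assoc emb_swap2)
  qed simp
  finally show ?thesis unfolding E_def atMost_atLeast0 sum_distrib_left .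
qed

lemma cz_E: "cz (E k r)" unfolding E_def T_def by (intro cz_sum cz_mult cz_emb cz_Bt0)
lemma cz_X: "cz (X k)" unfolding X_E by (intro cz_mult cz_emb cz_E)
lemma cz_Y: "cz (Y k)" unfolding Y_E by (intro cz_mult cz_emb cz_E)

lemma X0: "X 0 = emb (inverse (qint q 2 ^ 2)) * W 1" unfolding X_def by (simp add: Bt0_def power2_eq_square)
lemma Y0: "Y 0 = emb (inverse (qint q 2 ^ 2)) * W 0" unfolding Y_def by (simp add: Bt1_def power2_eq_square)

lemma X_Suc: "X (Suc k) = Y k + emb (q * Bcoef q / qint q 2) * comm Bd (X k)"
proof -
  have tz: "qint q 2 \<noteq> 0" using t2 t2nz by simp
  have pw: "qint q 2 ^ (k+3) = qint q 2 * qint q 2 ^ (k+2)" by (simp add: numeral_3_eq_3)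
  have "X (Suc k) = emb (inverse (qint q 2 ^ (k+3))) * (emb (qint q 2) * E k (-1) + emb q * (cB * comm Bd (E k 0)))"
  proof -
    have e: "Suc k + 2 = k + 3" by simp
    show ?thesis unfolding X_E L1 e by (rule refl)
  qed
  also have "\<dots> = emb (inverse (qint q 2 ^ (k+3)) * qint q 2) * E k (-1) + emb (inverse (qint q 2 ^ (k+3)) * q * Bcoef q) * comm Bd (E k 0)"
    by (simp add: distrib_left emb_emb mult.assoc)
  also have "inverse (qint q 2 ^ (k+3)) * qint q 2 = inverse (qint q 2 ^ (k+2))" unfolding pw using tz by (simp add: field_simps)
  also have "inverse (qint q 2 ^ (k+3)) * q * Bcoef q = q * Bcoef q / qint q 2 * inverse (qint q 2 ^ (k+2))" unfolding pw using tz by (simp add: field_simps)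
  finally show ?thesis unfolding Y_E X_E comm_emb by (simp add: emb_emb)
qed

lemma Y_Suc: "Y (Suc k) = X k - emb (Bcoef q / (q * qint q 2)) * comm Bd (Y k)"
proof -
  have tz: "qint q 2 \<noteq> 0" using t2 t2nz by simp
  have pw: "qint q 2 ^ (k+3) = qint q 2 * qint q 2 ^ (k+2)" by (simp add: numeral_3_eq_3)
  have "Y (Suc k) = emb (inverse (qint q 2 ^ (k+3))) * (emb (qint q 2) * E k 0 - emb (inverse q) * (cB * comm Bd (E k (-1))))"
  proof -
    have e: "Suc k + 2 = k + 3" by simp
    show ?thesis unfolding Y_E L2 e by (rule refl)
  qed
  also have "\<dots> = emb (inverse (qint q 2 ^ (k+3)) * qint q 2) * E k 0 - emb (inverse (qint q 2 ^ (k+3)) * inverse q * Bcoef q) * comm Bd (E k (-1))"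
    by (simp add: right_diff_distrib emb_emb mult.assoc)
  also have "inverse (qint q 2 ^ (k+3)) * qint q 2 = inverse (qint q 2 ^ (k+2))" unfolding pw using tz by (simp add: field_simps)
  also have "inverse (qint q 2 ^ (k+3)) * inverse q * Bcoef q = Bcoef q / (q * qint q 2) * inverse (qint q 2 ^ (k+2))" unfolding pw using tz q0 by (simp add: field_simps)
  finally show ?thesis unfolding Y_E X_E comm_emb by (simp add: emb_emb)
qed

abbreviation Gx where "Gx j \<equiv> Gext emb q G j"

lemma rB: "qcomm emb q (G (m+1)) (W 1) = emb (rho q) * W (int m + 2) - emb (rho q) * W (- int m)"
  using rel unfolding Oq_relations_def by blast
lemma rA: "qcomm emb q (W 0) (G (m+1)) = emb (rho q) * W (- int m - 1) - emb (rho q) * W (int m + 1)"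
  using rel unfolding Oq_relations_def by blast
lemma rC: "comm (W (int m + 1)) (G 1) + comm (G (m+1)) (W 1) = 0"
proof -
  have "\<forall>k l::nat. comm (W (int k + 1)) (G (l+1)) + comm (G (k+1)) (W (int l + 1)) = 0"
    using rel unfolding Oq_relations_def by blast
  then show ?thesis by (metis add_0 of_nat_0)
qed
lemma rD: "comm (W (- int m)) (G 1) + comm (G (m+1)) (W 0) = 0"
proof -
  have "\<forall>k l::nat. comm (W (- int k)) (G (l+1)) + comm (G (k+1)) (W (- int l)) = 0"
    using rel unfolding Oq_relations_def by blast
  then show ?thesis by (metis add_0 of_nat_0 minus_zero)
qed
lemma rGG: "comm (G 1) (G (j+1)) = 0"
proof -
  have "\<forall>k l::nat. comm (G (k+1)) (G (l+1)) = 0"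
    using rel unfolding Oq_relations_def by blast
  then show ?thesis by (metis add_0)
qed
lemma G1Gx: "comm (G 1) (Gx j) = 0"
proof (cases j)
  case 0 then show ?thesis by (simp add: Gext_def comm_def emb_central)
next
  case (Suc i) then show ?thesis using rGG[of i] by (simp add: Gext_def)
qed
lemma comm_mult_r: "comm x (y * z) = comm x y * z + y * comm x z"
  unfolding comm_def by (simp add: algebra_simps)
lemma comm_anti: "comm x y = - comm y x"
  unfolding comm_def by simp
lemma comm_minus: "comm x (- y) = - comm x y"
  unfolding comm_def by simp

lemma comm_G1_sum:
  assumes "\<And>k. cz (F k)"
  shows "comm (G 1) (\<Sum>k\<le>m. F k * Gx (m-k)) = - (emb q * (\<Sum>k\<le>m. comm Bd (F k) * Gx (m-k)))"
proof -
  have "comm (G 1) (\<Sum>k\<le>m. F k * Gx (m-k)) = (\<Sum>k\<le>m. comm (G 1) (F k * Gx (m-k)))" by (rule comm_sum)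
  also have "\<dots> = (\<Sum>k\<le>m. - (emb q * (comm Bd (F k) * Gx (m-k))))"
    by (rule sum.cong) (simp_all only: comm_mult_r G1Gx G1_cz[OF assms] mult_zero_right add_0_right mult_minus_left mult.assoc)
  finally show ?thesis by (simp add: sum_negf sum_distrib_left)
qed

definition kap where "kap = inverse (q - inverse q)"

lemma dnz: "q - inverse q \<noteq> 0"
proof
  assume "q - inverse q = 0"
  then have "q * (q - inverse q) = 0" by simp
  then have "q * q - 1 = 0" using q0 by (simp add: right_diff_distrib)
  then have "q^2 = 1" by (simp add: power2_eq_square)
  with q2 show False by simp
qed
lemma tnz: "qint q 2 \<noteq> 0" using t2 t2nz by simp
lemma rnz: "rho q \<noteq> 0"
proof -
  have "q^2 - inverse q ^ 2 = (q - inverse q) * (q + inverse q)" by (simp add: power2_eq_square algebra_simps)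
  then show ?thesis unfolding rho_def using dnz t2nz by simp
qed
lemma dt: "q^2 - inverse q ^ 2 = (q - inverse q) * qint q 2"
  unfolding t2 by (simp add: power2_eq_square algebra_simps)
lemma gen1: "(d::'k) \<noteq> 0 \<Longrightarrow> t \<noteq> 0 \<Longrightarrow> d + (- ((d*t)^2)) * (inverse d * inverse (t ^ 2)) = 0"
  by (simp add: field_simps power2_eq_square)
lemma gen2: "(d::'k) \<noteq> 0 \<Longrightarrow> t \<noteq> 0 \<Longrightarrow> x * (inverse d * x) + (- ((d*t)^2)) * (inverse d * (x * (x / (d * (d*t))) / t)) = 0"
  by (simp add: field_simps power2_eq_square)
lemma gen3: "(d::'k) \<noteq> 0 \<Longrightarrow> t \<noteq> 0 \<Longrightarrow> x \<noteq> 0 \<Longrightarrow> inverse x * (inverse d * x) + (- ((d*t)^2)) * (inverse d * ((x / (d * (d*t))) / (x * t))) = 0"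
  by (simp add: field_simps power2_eq_square)
lemma gen0: "(d::'k) \<noteq> 0 \<Longrightarrow> t \<noteq> 0 \<Longrightarrow> - (inverse d * (inverse (t ^ 2) * (- d * t ^ 2))) = 1"
  by (simp add: field_simps power2_eq_square)
lemma rho_dt: "rho q = - (((q - inverse q) * qint q 2)^2)" unfolding rho_def dt ..
lemma Bc_dt: "Bcoef q = q / ((q - inverse q) * ((q - inverse q) * qint q 2))" unfolding Bcoef_def dt ..
lemma sc1: "(q - inverse q) + rho q * (kap * inverse (qint q 2 ^ 2)) = 0"
  unfolding rho_dt kap_def by (rule gen1[OF dnz tnz])
lemma sc2: "q * (kap * q) + rho q * (kap * (q * Bcoef q / qint q 2)) = 0"
  unfolding rho_dt kap_def Bc_dt by (rule gen2[OF dnz tnz])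
lemma sc3: "inverse q * (kap * q) + rho q * (kap * (Bcoef q / (q * qint q 2))) = 0"
  unfolding rho_dt kap_def Bc_dt by (rule gen3[OF dnz tnz q0])
lemma sc0: "- (kap * (inverse (qint q 2 ^ 2) * (- (q - inverse q) * qint q 2 ^ 2))) = 1"
  unfolding kap_def by (rule gen0[OF dnz tnz])

definition ce1 where "ce1 = q * Bcoef q / qint q 2"
definition ce2 where "ce2 = Bcoef q / (q * qint q 2)"
lemma X_Suc': "X (Suc k) = Y k + emb ce1 * comm Bd (X k)" unfolding ce1_def by (rule X_Suc)
lemma Y_Suc': "Y (Suc k) = X k - emb ce2 * comm Bd (Y k)" unfolding ce2_def by (rule Y_Suc)
lemma sc2': "q * (kap * q) + rho q * (kap * ce1) = 0" unfolding ce1_def by (rule sc2)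
lemma sc3': "inverse q * (kap * q) + rho q * (kap * ce2) = 0" unfolding ce2_def by (rule sc3)

lemma main: "W (int n + 1) = - emb kap * (\<Sum>k\<le>n. X k * Gx (n-k)) \<and> W (- int n) = - emb kap * (\<Sum>k\<le>n. Y k * Gx (n-k))"
proof (induction n)
  case 0
  have a: "X 0 * Gx 0 = emb (inverse (qint q 2 ^ 2) * (- (q - inverse q) * qint q 2 ^ 2)) * W 1"
    unfolding X0 Gext_def by (simp only: simp_thms if_True mult.assoc emb_right[of "W 1"] emb_emb)
  have b: "Y 0 * Gx 0 = emb (inverse (qint q 2 ^ 2) * (- (q - inverse q) * qint q 2 ^ 2)) * W 0"
    unfolding Y0 Gext_def by (simp only: simp_thms if_True mult.assoc emb_right[of "W 0"] emb_emb)
  have c: "- emb kap * (emb s * x) = emb (- (kap * s)) * x" for s x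
    by (simp add: emb_emb emb_uminus)
  have d: "(\<Sum>k\<le>(0::nat). X k * Gx (0-k)) = X 0 * Gx 0" "(\<Sum>k\<le>(0::nat). Y k * Gx (0-k)) = Y 0 * Gx 0"
    by simp_all
  have e: "int 0 + 1 = 1" "- int 0 = 0" by simp_all
  show ?case by (simp only: d e a b c sc0 emb1 mult_1_left simp_thms)
next
  case (Suc m)
  note IH1 = Suc.IH[THEN conjunct1] and IH2 = Suc.IH[THEN conjunct2]
  define SX where "SX = (\<Sum>k\<le>m. X k * Gx (m-k))"
  define SY where "SY = (\<Sum>k\<le>m. Y k * Gx (m-k))"
  define DX where "DX = (\<Sum>k\<le>m. comm Bd (X k) * Gx (m-k))"
  define DY where "DY = (\<Sum>k\<le>m. comm Bd (Y k) * Gx (m-k))"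
  have cG1X: "comm (G 1) (W (int m + 1)) = emb kap * (emb q * DX)"
    unfolding IH1 DX_def
    by (simp only: mult_minus_left comm_minus comm_emb comm_G1_sum[OF cz_X] minus_minus mult_minus_right)
  have cG1Y: "comm (G 1) (W (- int m)) = emb kap * (emb q * DY)"
    unfolding IH2 DY_def
    by (simp only: mult_minus_left comm_minus comm_emb comm_G1_sum[OF cz_Y] minus_minus mult_minus_right)
  have cGW1: "comm (G (m+1)) (W 1) = emb kap * (emb q * DX)"
  proof -
    have "comm (G (m+1)) (W 1) = - comm (W (int m + 1)) (G 1)"
      using rC[of m] by (simp only: eq_neg_iff_add_eq_0 add.commute)
    also have "\<dots> = comm (G 1) (W (int m + 1))" by (subst comm_anti) (rule minus_minus)
    finally show ?thesis using cG1X by simp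
  qed
  have cGW0: "comm (G (m+1)) (W 0) = emb kap * (emb q * DY)"
  proof -
    have "comm (G (m+1)) (W 0) = - comm (W (- int m)) (G 1)"
      using rD[of m] by (simp only: eq_neg_iff_add_eq_0 add.commute)
    also have "\<dots> = comm (G 1) (W (- int m))" by (subst comm_anti) (rule minus_minus)
    finally show ?thesis using cG1Y by simp
  qed
  have qc1: "qcomm emb q (G (m+1)) (W 1) = emb (q - inverse q) * (W 1 * G (m+1)) + emb q * comm (G (m+1)) (W 1)"
    unfolding qcomm_def comm_def by (simp add: emb_diff algebra_simps)
  have qc0: "qcomm emb q (W 0) (G (m+1)) = emb (q - inverse q) * (W 0 * G (m+1)) - emb (inverse q) * comm (G (m+1)) (W 0)"
    unfolding qcomm_def comm_def by (simp add: emb_diff algebra_simps)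
  have WB: "emb (rho q) * W (int m + 2) = emb (rho q) * W (- int m) + qcomm emb q (G (m+1)) (W 1)"
    unfolding rB by simp
  have WA: "emb (rho q) * W (- int m - 1) = emb (rho q) * W (int m + 1) + qcomm emb q (W 0) (G (m+1))"
    unfolding rA by simp
  have SXs: "(\<Sum>k\<le>Suc m. X k * Gx (Suc m - k)) = emb (inverse (qint q 2 ^ 2)) * (W 1 * G (m+1)) + SY + emb ce1 * DX"
  proof -
    have "(\<Sum>k\<le>Suc m. X k * Gx (Suc m - k)) = X 0 * Gx (Suc m) + (\<Sum>k\<le>m. X (Suc k) * Gx (m - k))"
      by (simp only: sum.atMost_Suc_shift diff_Suc_Suc minus_nat.diff_0)
    also have "X 0 * Gx (Suc m) = emb (inverse (qint q 2 ^ 2)) * (W 1 * G (m+1))"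
      unfolding X0 Gext_def by (simp add: mult.assoc)
    also have "(\<Sum>k\<le>m. X (Suc k) * Gx (m - k)) = SY + emb ce1 * DX"
      unfolding X_Suc' SY_def DX_def by (simp add: distrib_right sum.distrib sum_distrib_left mult.assoc)
    finally show ?thesis by (simp add: add.assoc)
  qed
  have SYs: "(\<Sum>k\<le>Suc m. Y k * Gx (Suc m - k)) = emb (inverse (qint q 2 ^ 2)) * (W 0 * G (m+1)) + SX - emb ce2 * DY"
  proof -
    have "(\<Sum>k\<le>Suc m. Y k * Gx (Suc m - k)) = Y 0 * Gx (Suc m) + (\<Sum>k\<le>m. Y (Suc k) * Gx (m - k))"
      by (simp only: sum.atMost_Suc_shift diff_Suc_Suc minus_nat.diff_0)
    also have "Y 0 * Gx (Suc m) = emb (inverse (qint q 2 ^ 2)) * (W 0 * G (m+1))"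
      unfolding Y0 Gext_def by (simp add: mult.assoc)
    also have "(\<Sum>k\<le>m. Y (Suc k) * Gx (m - k)) = SX - emb ce2 * DY"
      unfolding Y_Suc' SX_def DY_def by (simp add: left_diff_distrib sum_subtractf sum_distrib_left mult.assoc)
    finally show ?thesis by (simp add: add_diff_eq)
  qed
  have E1: "emb (rho q) * (W (int m + 2) - - emb kap * (\<Sum>k\<le>Suc m. X k * Gx (Suc m - k)))
     = emb ((q - inverse q) + rho q * (kap * inverse (qint q 2 ^ 2))) * (W 1 * G (m+1))
       + emb (q * (kap * q) + rho q * (kap * ce1)) * DX"
    unfolding right_diff_distrib WB qc1 cGW1 IH2 SY_def[symmetric] SXs
    by (simp add: nf algebra_simps)
  have E2: "emb (rho q) * (W (- int m - 1) - - emb kap * (\<Sum>k\<le>Suc m. Y k * Gx (Suc m - k)))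
     = emb ((q - inverse q) + rho q * (kap * inverse (qint q 2 ^ 2))) * (W 0 * G (m+1))
       - emb (inverse q * (kap * q) + rho q * (kap * ce2)) * DY"
    unfolding right_diff_distrib WA qc0 cGW0 IH1 SX_def[symmetric] SYs
    by (simp add: nf algebra_simps)
  have F1: "W (int m + 2) - - emb kap * (\<Sum>k\<le>Suc m. X k * Gx (Suc m - k)) = 0"
    by (rule cancel_nz[OF rnz]) (simp only: E1 sc1 sc2' emb0 mult_zero_left add_0_right)
  have F2: "W (- int m - 1) - - emb kap * (\<Sum>k\<le>Suc m. Y k * Gx (Suc m - k)) = 0"
    by (rule cancel_nz[OF rnz]) (simp only: E2 sc1 sc3' emb0 mult_zero_left diff_zero)
  have i1: "int (Suc m) + 1 = int m + 2" and i2: "- int (Suc m) = - int m - 1" by simp_all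
  show ?case unfolding i1 i2 using F1 F2 by (simp only: right_minus_eq)
qed
end

theorem proposition12p3:
  fixes emb :: "'k::field \<Rightarrow> 'a::ring_1"
    and q :: 'k
    and W :: "int \<Rightarrow> 'a" and G Gt :: "nat \<Rightarrow> 'a"
  assumes "scalar_emb emb"
    and "q \<noteq> 0"
    and "\<forall>m::nat. m \<ge> 1 \<longrightarrow> q ^ m \<noteq> 1"
    and "Oq_relations emb q W G Gt"
  shows "\<forall>n::nat.
      W (int n + 1) = - emb (inverse (q - inverse q)) *
        (\<Sum>k\<le>n. \<Sum>l\<le>k. emb (of_nat (k choose l) * q powi (int k - 2 * int l) * inverse (qint q 2 ^ (k + 2)))
            * Bt0 emb q W (int k - 2 * int l) * Gext emb q G (n - k))
    \<and> W (- int n) = - emb (inverse (q - inverse q)) *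
        (\<Sum>k\<le>n. \<Sum>l\<le>k. emb (of_nat (k choose l) * q powi (2 * int l - int k) * inverse (qint q 2 ^ (k + 2)))
            * Bt1 emb q W (int k - 2 * int l) * Gext emb q G (n - k))"
proof -
  have q2: "q^2 \<noteq> 1" using assms(3) by (metis one_le_numeral)
  have q4: "q^4 \<noteq> 1" using assms(3) by (metis one_le_numeral)
  interpret oq emb q W G Gt
    by (unfold_locales) (simp_all add: assms(1,2,4) q2 q4)
  have m: "\<forall>n. W (int n + 1) = - emb kap * (\<Sum>k\<le>n. X k * Gx (n-k)) \<and> W (- int n) = - emb kap * (\<Sum>k\<le>n. Y k * Gx (n-k))"
    using main by blast
  show ?thesis using m unfolding X_def Y_def kap_def sum_distrib_right .
qed

end
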